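(* Let $n,d\ge0$ and $k>0$ be integers. Let $\lambda$ be a partition with $\lambda_1\le d$ and $\ell(\lambda)\le k$. Let $\alpha$ be a partition with $\alpha_{n+1}\le n+d$ such that $\tau_{2k}(\alpha)$ is defined and equals $\lambda$, and let $w$ be a finite permutation of the positive integers such that $w\bullet\alpha^\dagger=(\beta_1,\dots,\beta_{n+d},\gamma_1,\gamma_2,\dots)$ with $\beta_1\ge\cdots\ge\beta_{n+d}$ and $n\ge\gamma_1\ge\gamma_2\ge\cdots\ge0$. Then $|\gamma|\le\iota_{2k}(\alpha)+\ell(w)$. Moreover, if $|\gamma|=\iota_{2k}(\alpha)+\ell(w)$, then $\iota_{2k}(\alpha)=0$ and $\alpha^\dagger=\lambda^\dagger=(\beta_1,\dots,\beta_d)$, and $w\bullet\alpha^\dagger=(\lambda^\dagger_1,\dots,\lambda^\dagger_d,-\gamma^\dagger_n,\dots,-\gamma^\dagger_1,\gamma_1,\gamma_2,\dots)$ where $|\gamma|=\ell(w)$.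
   Context: Partitions are identified with infinite weakly decreasing sequences of nonnegative integers, eventually $0$; $\lambda^\dagger$ is the transpose partition, $\ell(\lambda)$ the number of nonzero parts, $|\gamma|=\sum_i\gamma_i$. For a finite permutation $w$ and a sequence $a$, $w(a)_i=a_{w^{-1}(i)}$; with $\rho=(-1,-2,-3,\dots)$, $w\bullet a=w(a+\rho)-\rho$; $\ell(w)=\#\{i<j: w(i)>w(j)\}$. A border strip is a connected skew Young diagram containing no $2\times2$ square; $c(R)$ is the number of columns a border strip $R$ occupies. Type C modification rule (quantities $\iota_{2k}=\iota^{\mathrm C}_{2k}$ and $\tau_{2k}=\tau^{\mathrm C}_{2k}$): if $\ell(\lambda)\le k$, put $\iota_{2k}(\lambda)=0$, $\tau_{2k}(\lambda)=\lambda$. If $\ell(\lambda)>k$, let $R_\lambda$ be the border strip of length $2\ell(\lambda)-2k-2$ consisting of the first that many boxes of the rim of $\lambda$ (boxes $(i,j)\in\lambda$ with $(i+1,j+1)\notin\lambda$), traversed starting from the first box (row $\ell(\lambda)$, column $1$) of the final row, if it exists. If $R_\lambda$ exists, is nonempty, and $\lambda\setminus R_\lambda$ is a partition, put $\iota_{2k}(\lambda)=c(R_\lambda)+\iota_{2k}(\lambda\setminus R_\lambda)$ and $\tau_{2k}(\lambda)=\tau_{2k}(\lambda\setminus R_\lambda)$; otherwise $\iota_{2k}(\lambda)=\infty$ and $\tau_{2k}(\lambda)$ is undefined. *)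

theory Defs
  imports Main "HOL-Library.Extended_Nat"
begin

(* Conventions: all sequences are 0-indexed, i.e. entry i of a sequence
   (a :: nat => _) is the paper's entry a_{i+1}.  Boxes of Young diagrams are
   0-indexed pairs (row, column). *)

definition is_partition :: "(nat \<Rightarrow> nat) \<Rightarrow> bool" where
  "is_partition p \<longleftrightarrow> (\<forall>i. p (Suc i) \<le> p i) \<and> finite {i. p i \<noteq> 0}"

definition plen :: "(nat \<Rightarrow> nat) \<Rightarrow> nat" where
  "plen p = card {i. p i \<noteq> 0}"

definition conj :: "(nat \<Rightarrow> nat) \<Rightarrow> nat \<Rightarrow> nat" where
  "conj p j = card {i. j < p i}"

definition conjZ :: "(nat \<Rightarrow> int) \<Rightarrow> nat \<Rightarrow> nat" where
  "conjZ p j = card {i. int j < p i}"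

definition diagram :: "(nat \<Rightarrow> nat) \<Rightarrow> (nat \<times> nat) set" where
  "diagram p = {(i, j). j < p i}"

definition rim :: "(nat \<Rightarrow> nat) \<Rightarrow> (nat \<times> nat) set" where
  "rim p = {(i, j). (i, j) \<in> diagram p \<and> (Suc i, Suc j) \<notin> diagram p}"

fun rim_path :: "(nat \<Rightarrow> nat) \<Rightarrow> nat \<Rightarrow> nat \<times> nat" where
  "rim_path p 0 = (plen p - 1, 0)"
| "rim_path p (Suc t) = (let (i, j) = rim_path p t in
     if Suc j < p i then (i, Suc j) else (i - 1, j))"

definition border_strip :: "(nat \<Rightarrow> nat) \<Rightarrow> nat \<Rightarrow> (nat \<times> nat) set" where
  "border_strip p m = rim_path p ` {..<m}"

definition ncols :: "(nat \<times> nat) set \<Rightarrow> nat" where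
  "ncols R = card (snd ` R)"

definition is_young :: "(nat \<times> nat) set \<Rightarrow> bool" where
  "is_young D \<longleftrightarrow> (\<exists>q. is_partition q \<and> diagram q = D)"

definition shape :: "(nat \<times> nat) set \<Rightarrow> nat \<Rightarrow> nat" where
  "shape D i = card {j. (i, j) \<in> D}"

(* Type C modification rule: Some (iota_{2k}(p), tau_{2k}(p)), or None when
   iota_{2k}(p) = infinity and tau_{2k}(p) is undefined. *)
partial_function (option) iota_tau :: "nat \<Rightarrow> (nat \<Rightarrow> nat) \<Rightarrow> (nat \<times> (nat \<Rightarrow> nat)) option" where
  "iota_tau k p =
    (if plen p \<le> k then Some (0, p)
     else (let m = 2 * plen p - 2 * k - 2; R = border_strip p m in
       if m = 0 \<or> card (rim p) < m \<or> \<not> is_young (diagram p - R) then None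
       else Option.bind (iota_tau k (shape (diagram p - R)))
              (\<lambda>(c, t). Some (ncols R + c, t))))"

definition iotaC :: "nat \<Rightarrow> (nat \<Rightarrow> nat) \<Rightarrow> enat" where
  "iotaC k p = (case iota_tau k p of None \<Rightarrow> \<infinity> | Some (c, t) \<Rightarrow> enat c)"

definition tauC :: "nat \<Rightarrow> (nat \<Rightarrow> nat) \<Rightarrow> (nat \<Rightarrow> nat) option" where
  "tauC k p = map_option snd (iota_tau k p)"

definition finite_perm :: "(nat \<Rightarrow> nat) \<Rightarrow> bool" where
  "finite_perm w \<longleftrightarrow> bij w \<and> finite {i. w i \<noteq> i}"

definition perm_length :: "(nat \<Rightarrow> nat) \<Rightarrow> nat" where
  "perm_length w = card {(i, j). i < j \<and> w j < w i}"

definition rho :: "nat \<Rightarrow> int" where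
  "rho i = - (int i + 1)"

(* w(a)_i = a_{w^{-1}(i)};  w \<bullet> a = w(a + rho) - rho *)
definition dot :: "(nat \<Rightarrow> nat) \<Rightarrow> (nat \<Rightarrow> int) \<Rightarrow> nat \<Rightarrow> int" where
  "dot w a i = a (inv w i) + rho (inv w i) - rho i"

definition seqsize :: "(nat \<Rightarrow> int) \<Rightarrow> int" where
  "seqsize g = (\<Sum>i\<in>{i. g i \<noteq> 0}. g i)"

end

theory Submission
  imports Defs
begin


definition Bd :: "nat \<Rightarrow> (nat \<Rightarrow> nat) \<Rightarrow> nat" where
  "Bd d p = card {(j, c). c < p j \<and> j + d + 1 \<le> c}"

definition DD :: "nat \<times> nat \<Rightarrow> int" where
  "DD x = int (snd x) - int (fst x)"

lemma rp_step: "rim_path p (Suc t) = (if Suc (snd (rim_path p t)) < p (fst (rim_path p t))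
   then (fst (rim_path p t), Suc (snd (rim_path p t))) else (fst (rim_path p t) - 1, snd (rim_path p t)))"
  by (simp add: split_def Let_def)

lemma rp_S1: "rim_path p (Suc t) = rim_path p t \<or> DD (rim_path p (Suc t)) = DD (rim_path p t) + 1"
  unfolding rp_step DD_def by (cases "rim_path p t") auto

lemma rp_mono_step: "DD (rim_path p t) \<le> DD (rim_path p (Suc t))"
  using rp_S1[of p t] by auto

lemma rp_mono: "s \<le> t \<Longrightarrow> DD (rim_path p s) \<le> DD (rim_path p t)"
  using lift_Suc_mono_le[of "\<lambda>t. DD (rim_path p t)"] rp_mono_step by blast

lemma rp_inj: "\<forall>s\<le>t. DD (rim_path p s) = DD (rim_path p t) \<longrightarrow> rim_path p s = rim_path p t"
proof (induction t)
  case 0 then show ?case by auto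
next
  case (Suc t)
  show ?case
  proof (cases "rim_path p (Suc t) = rim_path p t")
    case True
    then show ?thesis using Suc by (metis le_Suc_eq)
  next
    case False
    then have "DD (rim_path p (Suc t)) = DD (rim_path p t) + 1" using rp_S1 by blast
    then show ?thesis using rp_mono[of _ t p] by (metis le_Suc_eq not_one_le_zero add_le_same_cancel1)
  qed
qed

lemma rp_snd: "snd (rim_path p (Suc t)) = snd (rim_path p t) \<or> snd (rim_path p (Suc t)) = Suc (snd (rim_path p t))"
  unfolding rp_step by auto

lemma rp_down: "\<forall>c\<le>snd (rim_path p t). \<exists>s\<le>t. snd (rim_path p s) = c"
proof (induction t)
  case 0 then show ?case by simp
next
  case (Suc t)
  show ?case
  proof (intro allI impI)
    fix c assume c: "c \<le> snd (rim_path p (Suc t))"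
    show "\<exists>s\<le>Suc t. snd (rim_path p s) = c"
    proof (cases "c = snd (rim_path p (Suc t))")
      case True then show ?thesis by blast
    next
      case False
      then have "c \<le> snd (rim_path p t)" using c rp_snd[of p t] by auto
      then show ?thesis using Suc by (meson le_Suc_eq)
    qed
  qed
qed

lemma strip_cols:
  assumes "0 < m"
  shows "card ({(j, c). j + d + 1 \<le> c} \<inter> border_strip p m) + 1 \<le> ncols (border_strip p m)"
proof -
  let ?R = "border_strip p m"
  let ?S = "{(j, c). j + d + 1 \<le> (c::nat)} \<inter> ?R"
  have finR: "finite ?R" unfolding border_strip_def by simp
  have "snd (rim_path p 0) = 0" by simp
  then have z: "0 \<in> snd ` ?R" unfolding border_strip_def using assms by force
  have "inj_on (\<lambda>x. snd x - fst x) ?S"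
  proof (rule inj_onI)
    fix x y assume x: "x \<in> ?S" and y: "y \<in> ?S" and e: "snd x - fst x = snd y - fst y"
    from x obtain s where s: "x = rim_path p s" by (auto simp: border_strip_def)
    from y obtain t where t: "y = rim_path p t" by (auto simp: border_strip_def)
    have "DD x = DD y" using x y e unfolding DD_def by auto
    show "x = y"
    proof (cases "s \<le> t")
      case True then show ?thesis using rp_inj[of t p] s t \<open>DD x = DD y\<close> by blast
    next
      case False
      then have "t \<le> s" by simp
      with rp_inj[of s p] have "DD (rim_path p t) = DD (rim_path p s) \<longrightarrow> rim_path p t = rim_path p s" by blast
      then show ?thesis using s t \<open>DD x = DD y\<close> by simp
    qed
  qed
  moreover have "(\<lambda>x. snd x - fst x) ` ?S \<subseteq> snd ` ?R - {0}"
  proof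
    fix z assume "z \<in> (\<lambda>x. snd x - fst x) ` ?S"
    then obtain x where x: "x \<in> ?S" and zx: "z = snd x - fst x" by blast
    from x obtain s where s: "x = rim_path p s" "s < m" by (auto simp: border_strip_def)
    have "z \<le> snd (rim_path p s)" using zx s by simp
    then obtain s' where "s' \<le> s" "snd (rim_path p s') = z" using rp_down by blast
    then have "z \<in> snd ` ?R" using s unfolding border_strip_def by force
    moreover have "z \<noteq> 0" using x zx by auto
    ultimately show "z \<in> snd ` ?R - {0}" by blast
  qed
  moreover have "finite (snd ` ?R - {0})" using finR by simp
  ultimately have "card ?S \<le> card (snd ` ?R - {0})"
    by (rule card_inj_on_le)
  also have "\<dots> = ncols ?R - 1" unfolding ncols_def using z finR by simp
  moreover have "ncols ?R > 0" unfolding ncols_def using z finR card_gt_0_iff by blast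
  ultimately show ?thesis by linarith
qed

lemma Bd_strip:
  assumes "0 < m" "finite (diagram p)" "diagram q = diagram p - border_strip p m"
  shows "Bd d p + 1 \<le> Bd d q + ncols (border_strip p m)"
proof -
  let ?R = "border_strip p m"
  let ?S = "{(j, c). j + d + 1 \<le> (c::nat)} \<inter> ?R"
  have fR: "finite ?R" unfolding border_strip_def by simp
  have fq: "finite (diagram q)" using assms by simp
  have "{(j, c). c < p j \<and> j + d + 1 \<le> c} \<subseteq> {(j, c). c < q j \<and> j + d + 1 \<le> c} \<union> ?S"
    using assms(3) unfolding diagram_def by auto
  moreover have "finite {(j, c). c < q j \<and> j + d + 1 \<le> c}"
    using fq by (rule finite_subset[rotated]) (auto simp: diagram_def)
  ultimately have "Bd d p \<le> card ({(j, c). c < q j \<and> j + d + 1 \<le> c} \<union> ?S)"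
    unfolding Bd_def using fR by (meson card_mono finite_Int finite_UnI)
  also have "\<dots> \<le> Bd d q + card ?S" unfolding Bd_def by (rule card_Un_le)
  finally show ?thesis using strip_cols[OF assms(1), of d p] by linarith
qed

lemma part_anti: "is_partition p \<Longrightarrow> i \<le> j \<Longrightarrow> p j \<le> p i"
  unfolding is_partition_def using lift_Suc_antimono_le[of p] by blast

lemma part_level:
  assumes "is_partition p"
  shows "{i. c < p i} = {..< card {i. c < p i}}"
proof -
  have "finite {i. p i \<noteq> 0}" using assms unfolding is_partition_def by blast
  then obtain i0 where "p i0 = 0" using infinite_UNIV_nat
    by (metis (mono_tags, lifting) UNIV_I mem_Collect_eq subsetI finite_subset)
  then have ex: "\<exists>i. \<not> c < p i" by (metis not_less_zero)
  define K where "K = (LEAST i. \<not> c < p i)"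
  have "{i. c < p i} = {..<K}"
  proof (intro set_eqI iffI)
    fix i assume "i \<in> {i. c < p i}"
    then show "i \<in> {..<K}" unfolding K_def by (metis (mono_tags) LeastI ex lessThan_iff mem_Collect_eq not_le part_anti[OF assms] order.strict_trans2)
  next
    fix i assume "i \<in> {..<K}"
    then show "i \<in> {i. c < p i}" unfolding K_def using not_less_Least by auto
  qed
  then show ?thesis by simp
qed

lemma conj_iff: "is_partition p \<Longrightarrow> r < conj p c \<longleftrightarrow> c < p r"
  unfolding conj_def using part_level[of p c] by (metis lessThan_iff mem_Collect_eq)

lemma plen_iff: "is_partition p \<Longrightarrow> p i \<noteq> 0 \<longleftrightarrow> i < plen p"
  using conj_iff[of p i 0] unfolding conj_def plen_def by (simp add: neq0_conv)

lemma diagram_finite: "is_partition p \<Longrightarrow> finite (diagram p)"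
proof -
  assume a: "is_partition p"
  have "diagram p \<subseteq> {..<plen p} \<times> {..<p 0}"
    using plen_iff[OF a] part_anti[OF a] unfolding diagram_def
    by (auto, metis not_less_zero, meson le0 order_less_le_trans)
  then show ?thesis by (rule finite_subset) simp
qed

lemma shape_diagram: "shape (diagram q) = q"
  unfolding shape_def diagram_def by (rule ext) simp

lemma young_shape: "is_young D \<Longrightarrow> is_partition (shape D) \<and> diagram (shape D) = D"
  unfolding is_young_def using shape_diagram by metis

lemma Bd_zero: "is_partition p \<Longrightarrow> p 0 \<le> d \<Longrightarrow> Bd d p = 0"
proof -
  assume a: "is_partition p" "p 0 \<le> d"
  have "{(j, c). c < p j \<and> j + d + 1 \<le> c} = {}"
  proof (intro set_eqI iffI)
    fix x assume x: "x \<in> {(j, c). c < p j \<and> j + d + 1 \<le> c}"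
    obtain j c where xj: "x = (j, c)" by fastforce
    have "p j \<le> p 0" by (rule part_anti[OF a(1)]) simp
    then show "x \<in> {}" using x xj a(2) by simp
  qed simp
  then show ?thesis unfolding Bd_def by (metis card.empty)
qed

lemma iota_main:
  "\<forall>p c t. card (diagram p) = N \<longrightarrow> iota_tau k p = Some (c, t) \<longrightarrow> is_partition p \<longrightarrow> t 0 \<le> d
     \<longrightarrow> Bd d p + (if c = 0 then 0 else 1) \<le> c \<and> (c = 0 \<longrightarrow> t = p)"
proof (induction N rule: less_induct)
  case (less N)
  show ?case
  proof (intro allI impI)
    fix p c t
    assume N: "card (diagram p) = N" and it: "iota_tau k p = Some (c, t)"
      and pp: "is_partition p" and t0: "t 0 \<le> d"
    show "Bd d p + (if c = 0 then 0 else 1) \<le> c \<and> (c = 0 \<longrightarrow> t = p)"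
    proof (cases "plen p \<le> k")
      case True
      then have "c = 0" "t = p" using it iota_tau.simps[of k p] by auto
      then show ?thesis using Bd_zero[OF pp] t0 by simp
    next
      case False
      define m where "m = 2 * plen p - 2 * k - 2"
      define R where "R = border_strip p m"
      define q where "q = shape (diagram p - R)"
      have it2: "(if m = 0 \<or> card (rim p) < m \<or> \<not> is_young (diagram p - R) then None
         else Option.bind (iota_tau k q) (\<lambda>(c, t). Some (ncols R + c, t))) = Some (c, t)"
        using it iota_tau.simps[of k p] False unfolding m_def R_def q_def Let_def by simp
      then have m0: "0 < m" and y: "is_young (diagram p - R)"
        and "Option.bind (iota_tau k q) (\<lambda>(c, t). Some (ncols R + c, t)) = Some (c, t)"
        by (auto split: if_splits)
      then obtain c' where itq: "iota_tau k q = Some (c', t)" and cc: "c = ncols R + c'"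
        by (auto simp: bind_eq_Some_conv split: prod.splits)
      have qp: "is_partition q" and dq: "diagram q = diagram p - R"
        using young_shape[OF y] unfolding q_def by auto
      have fp: "finite (diagram p)" using diagram_finite[OF pp] .
      have bs: "Bd d p + 1 \<le> Bd d q + ncols R"
        using Bd_strip[OF m0 fp dq[unfolded R_def]] unfolding R_def .
      have nc: "0 < ncols R" using strip_cols[OF m0, of d p] unfolding R_def by simp
      have l0: "0 < plen p" using False by simp
      have "(plen p - 1, 0) \<in> R" unfolding R_def border_strip_def using m0
        by (metis imageI lessThan_iff rim_path.simps(1))
      moreover have "(plen p - 1, 0) \<in> diagram p"
        unfolding diagram_def using plen_iff[OF pp, of "plen p - 1"] l0 by simp
      ultimately have "diagram q \<subset> diagram p" using dq by blast
      then have "card (diagram q) < N" using N psubset_card_mono[OF fp] by blast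
      then have ih: "Bd d q + (if c' = 0 then 0 else 1) \<le> c'"
        using less[of "card (diagram q)"] itq qp t0 by blast
      show ?thesis using bs ih cc nc by (auto split: if_splits)
    qed
  qed
qed



lemma down_closed: "finite (A::nat set) \<Longrightarrow> (\<forall>x\<in>A. \<forall>y\<le>x. y \<in> A) \<Longrightarrow> A = {..<card A}"
proof -
  assume f: "finite A" and dc: "\<forall>x\<in>A. \<forall>y\<le>x. y \<in> A"
  have ex: "\<exists>x. x \<notin> A" using f infinite_UNIV_nat by (metis UNIV_eq_I)
  define K where "K = (LEAST x. x \<notin> A)"
  have "A = {..<K}"
  proof (intro set_eqI iffI)
    fix x assume "x \<in> A"
    then show "x \<in> {..<K}" unfolding K_def using dc LeastI_ex[OF ex] by (metis lessThan_iff not_le)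
  next
    fix x assume "x \<in> {..<K}"
    then show "x \<in> A" unfolding K_def using not_less_Least by auto
  qed
  then show ?thesis by simp
qed

locale pset =
  fixes w a :: "nat \<Rightarrow> nat" and N n d K :: nat and beta gamma :: "nat \<Rightarrow> int"
  assumes bw: "bij w" and fw: "finite {i. w i \<noteq> i}"
    and aanti: "\<forall>i. a (Suc i) \<le> a i" and az: "\<forall>j\<ge>K. a j = 0"
    and H: "\<forall>i. int (a (inv w i)) - int (inv w i) + int i = (if i < N then beta i else gamma (i - N))"
    and Nd: "N = n + d" and bmono: "\<forall>i. Suc i < N \<longrightarrow> beta (Suc i) \<le> beta i"
    and g0: "gamma 0 \<le> int n" and gm: "\<forall>i. gamma (Suc i) \<le> gamma i" and gnn: "\<forall>i. 0 \<le> gamma i"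
begin

abbreviation "v \<equiv> inv w"
definition J :: "nat \<Rightarrow> nat" where "J t = v (N + t)"

lemma wv: "w (v i) = i" using bw by (simp add: bij_is_surj surj_f_inv_f)
lemma vw: "v (w i) = i" using bw by (simp add: bij_is_inj inv_f_f)
lemma vinj: "v x = v y \<Longrightarrow> x = y" by (metis wv)
lemma winj: "w x = w y \<Longrightarrow> x = y" by (metis vw)

lemma a_anti: "i \<le> j \<Longrightarrow> a j \<le> a i"
  using lift_Suc_antimono_le[of a] aanti by blast

lemma b_anti: "j < N \<Longrightarrow> i \<le> j \<Longrightarrow> beta j \<le> beta i"
proof (induction j)
  case 0 then show ?case by simp
next
  case (Suc j)
  show ?case
  proof (cases "i = Suc j")
    case True then show ?thesis by simp
  next
    case False
    then have "i \<le> j" "j < N" using Suc.prems by auto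
    then have "beta j \<le> beta i" using Suc.IH by blast
    moreover have "beta (Suc j) \<le> beta j" using bmono Suc.prems(1) by blast
    ultimately show ?thesis by linarith
  qed
qed

lemma g_anti: "i \<le> j \<Longrightarrow> gamma j \<le> gamma i"
  using lift_Suc_antimono_le[of gamma] gm by blast

lemma sH: "int (a (v i)) - int (v i) + int i = (if i < N then beta i else gamma (i - N))"
  using H by blast

lemma vneq: "i \<noteq> j \<Longrightarrow> v i \<noteq> v j"
  using vinj by blast

lemma F1: "i < j \<Longrightarrow> j < N \<Longrightarrow> v i < v j"
proof (rule ccontr)
  assume ij: "i < j" "j < N" and "\<not> v i < v j"
  moreover have "v i \<noteq> v j" using vneq ij by simp
  ultimately have lt: "v j < v i" by linarith
  then have "a (v i) \<le> a (v j)" using a_anti by simp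
  moreover have "beta j \<le> beta i" using b_anti ij by simp
  moreover have "int (a (v i)) - int (v i) + int i = beta i" using sH[of i] ij by simp
  moreover have "int (a (v j)) - int (v j) + int j = beta j" using sH[of j] ij by simp
  ultimately show False using ij lt by linarith
qed

lemma F2: "N \<le> i \<Longrightarrow> i < j \<Longrightarrow> v i < v j"
proof (rule ccontr)
  assume ij: "N \<le> i" "i < j" and "\<not> v i < v j"
  moreover have "v i \<noteq> v j" using vneq ij by simp
  ultimately have lt: "v j < v i" by linarith
  then have "a (v i) \<le> a (v j)" using a_anti by simp
  moreover have "gamma (j - N) \<le> gamma (i - N)" using g_anti ij by simp
  moreover have "int (a (v i)) - int (v i) + int i = gamma (i - N)" using sH[of i] ij by simp
  moreover have "int (a (v j)) - int (v j) + int j = gamma (j - N)" using sH[of j] ij by simp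
  ultimately show False using ij lt by linarith
qed

lemma gJ: "gamma t = int (a (J t)) - int (J t) + int N + int t"
  using sH[of "N + t"] unfolding J_def by simp

lemma F3: "a (J t) + d + t \<le> J t"
proof -
  have "gamma t \<le> int n" using g_anti[of 0 t] g0 by simp
  then show ?thesis using gJ[of t] Nd by simp
qed

lemma Jinj: "J s = J t \<Longrightarrow> s = t" unfolding J_def using vinj by force

lemma card_vless: "card {p. v p < k} = k"
proof -
  have "{p. v p < k} = w ` {..<k}"
  proof (intro set_eqI iffI)
    fix p assume "p \<in> {p. v p < k}"
    then have "w (v p) \<in> w ` {..<k}" by simp
    then show "p \<in> w ` {..<k}" by (simp only: wv)
  next
    fix p assume "p \<in> w ` {..<k}"
    then show "p \<in> {p. v p < k}" using vw by auto
  qed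
  moreover have "inj_on w {..<k}" using winj by (meson inj_onI)
  ultimately show ?thesis by (simp add: card_image)
qed

definition A :: "nat \<Rightarrow> nat set" where "A t = {p. p < N \<and> v p < J t}"
definition C :: "nat \<Rightarrow> nat set" where "C t = {p. p < N \<and> J t < v p}"

lemma A_card: "card (A t) + t = J t"
proof -
  have e: "{p. v p < J t} = A t \<union> {N..<N+t}"
  proof (intro set_eqI iffI)
    fix p assume p: "p \<in> {p. v p < J t}"
    show "p \<in> A t \<union> {N..<N+t}"
    proof (cases "p < N")
      case True then show ?thesis using p unfolding A_def by simp
    next
      case False
      have "p < N + t"
      proof (rule ccontr)
        assume "\<not> p < N + t"
        then have "N + t \<le> p" by simp
        then have "J t \<le> v p" unfolding J_def using F2[of "N+t" p] by (cases "N + t = p") auto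
        then show False using p by simp
      qed
      then show ?thesis using False by simp
    qed
  next
    fix p assume "p \<in> A t \<union> {N..<N+t}"
    then show "p \<in> {p. v p < J t}" unfolding A_def J_def using F2 by auto
  qed
  have "card (A t \<union> {N..<N+t}) = card (A t) + card {N..<N+t}"
    by (rule card_Un_disjoint) (auto simp: A_def)
  then show ?thesis using e card_vless[of "J t"] by simp
qed

lemma AC_card: "card (A t) + card (C t) = N"
proof -
  have "{..<N} = A t \<union> C t"
  proof (intro set_eqI iffI)
    fix p assume "p \<in> {..<N}"
    moreover have "v p \<noteq> J t" using \<open>p \<in> {..<N}\<close> vinj unfolding J_def by force
    ultimately show "p \<in> A t \<union> C t" unfolding A_def C_def by auto
  qed (auto simp: A_def C_def)
  moreover have "card (A t \<union> C t) = card (A t) + card (C t)"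
    by (rule card_Un_disjoint) (auto simp: A_def C_def)
  ultimately have "card (A t) + card (C t) = card {..<N}" by simp
  then show ?thesis by simp
qed

lemma G: "gamma t \<le> int (a (J t)) + int (card (C t))"
  using gJ[of t] A_card[of t] AC_card[of t] by simp

lemma Mbound: "\<exists>M. \<forall>i\<ge>M. w i = i"
proof -
  obtain M where "\<forall>x\<in>{i. w i \<noteq> i}. x < M" using fw finite_nat_set_iff_bounded by blast
  then show ?thesis by (meson leD mem_Collect_eq)
qed

lemma gamma_supp: "\<exists>T. \<forall>t\<ge>T. gamma t = 0"
proof -
  obtain M where M: "\<forall>i\<ge>M. w i = i" using Mbound by blast
  have "\<forall>t\<ge>M + K. gamma t = 0"
  proof (intro allI impI)
    fix t assume t: "M + K \<le> t"
    then have "w (N + t) = N + t" using M by simp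
    then have "J t = N + t" unfolding J_def using vw by metis
    moreover then have "a (J t) = 0" using az t by simp
    ultimately show "gamma t = 0" using gJ[of t] by simp
  qed
  then show ?thesis by blast
qed

definition Inv :: "(nat \<times> nat) set" where "Inv = {(i, j). i < j \<and> w j < w i}"

lemma Inv_finite: "finite Inv"
proof -
  obtain M where M: "\<forall>i\<ge>M. w i = i" using Mbound by blast
  have "Inv \<subseteq> {..<M} \<times> {..<M + sum w {..<M} + 1}"
  proof
    fix x assume x: "x \<in> Inv"
    obtain i j where xij: "x = (i, j)" by fastforce
    have ij: "i < j" "w j < w i" using x xij unfolding Inv_def by auto
    have iM: "i < M"
    proof (rule ccontr)
      assume "\<not> i < M"
      then have "w i = i" "w j = j" using M ij by auto
      then show False using ij by simp
    qed
    have "w i \<le> sum w {..<M}" using iM by (intro member_le_sum) auto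
    moreover have "j < M \<or> w j = j" using M by (meson not_le)
    ultimately have "j < M + sum w {..<M} + 1" using ij by auto
    then show "x \<in> {..<M} \<times> {..<M + sum w {..<M} + 1}" using iM xij by simp
  qed
  then show ?thesis by (rule finite_subset) simp
qed

lemma perm_length_Inv: "perm_length w = card Inv"
  unfolding perm_length_def Inv_def by simp

lemma C_finite: "finite (C t)" unfolding C_def by simp

lemma Sum1: "(\<Sum>t<T. card (C t)) \<le> perm_length w"
proof -
  have "(\<Sum>t<T. card (C t)) = card (SIGMA t:{..<T}. C t)"
    using C_finite by simp
  also have "\<dots> \<le> card Inv"
  proof (rule card_inj_on_le[where f = "\<lambda>(t, p). (J t, v p)"])
    show "inj_on (\<lambda>(t, p). (J t, v p)) (SIGMA t:{..<T}. C t)"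
      by (rule inj_onI) (auto dest: Jinj vinj)
    show "(\<lambda>(t, p). (J t, v p)) ` (SIGMA t:{..<T}. C t) \<subseteq> Inv"
    proof
      fix x assume "x \<in> (\<lambda>(t, p). (J t, v p)) ` (SIGMA t:{..<T}. C t)"
      then obtain t p where x: "x = (J t, v p)" and p: "p < N" "J t < v p" unfolding C_def by auto
      have "w (v p) < w (J t)" unfolding J_def using wv p by simp
      then show "x \<in> Inv" unfolding Inv_def using x p by simp
    qed
    show "finite Inv" by (rule Inv_finite)
  qed
  finally show ?thesis using perm_length_Inv by simp
qed

lemma Sum2: "(\<Sum>t<T. a (J t)) \<le> card {(r, c). r < a c \<and> r + d + 1 \<le> c}"
proof -
  have "(\<Sum>t<T. a (J t)) = card (SIGMA t:{..<T}. {..<a (J t)})" by simp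
  also have "\<dots> \<le> card {(r, c). r < a c \<and> r + d + 1 \<le> c}"
  proof (rule card_inj_on_le[where f = "\<lambda>(t, r). (r, J t)"])
    show "inj_on (\<lambda>(t, r). (r, J t)) (SIGMA t:{..<T}. {..<a (J t)})"
      by (rule inj_onI) (auto dest: Jinj)
    show "(\<lambda>(t, r). (r, J t)) ` (SIGMA t:{..<T}. {..<a (J t)}) \<subseteq> {(r, c). r < a c \<and> r + d + 1 \<le> c}"
    proof
      fix x assume "x \<in> (\<lambda>(t, r). (r, J t)) ` (SIGMA t:{..<T}. {..<a (J t)})"
      then obtain t r where x: "x = (r, J t)" and r: "r < a (J t)" by auto
      have "a (J t) + d + t \<le> J t" by (rule F3)
      then show "x \<in> {(r, c). r < a c \<and> r + d + 1 \<le> c}" using x r by simp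
    qed
    have "{(r, c). r < a c \<and> r + d + 1 \<le> c} \<subseteq> {..<a 0} \<times> {..<K}"
    proof
      fix x assume x: "x \<in> {(r, c). r < a c \<and> r + d + 1 \<le> c}"
      obtain r c where xrc: "x = (r, c)" by fastforce
      have "r < a c" using x xrc by simp
      moreover have "a c \<le> a 0" using a_anti by simp
      moreover have "c < K" using az \<open>r < a c\<close> by (metis not_less0 not_le)
      ultimately show "x \<in> {..<a 0} \<times> {..<K}" using xrc by simp
    qed
    then show "finite {(r, c). r < a c \<and> r + d + 1 \<le> c}" by (rule finite_subset) simp
  qed
  finally show ?thesis .
qed

lemma main_ineq: "\<exists>T. (\<forall>t\<ge>T. gamma t = 0) \<and> seqsize gamma = (\<Sum>t<T. gamma t) \<and>
   (\<Sum>t<T. gamma t) \<le> int (card {(r, c). r < a c \<and> r + d + 1 \<le> c}) + int (perm_length w)"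
proof -
  obtain T where T: "\<forall>t\<ge>T. gamma t = 0" using gamma_supp by blast
  have seq: "seqsize gamma = (\<Sum>t<T. gamma t)"
    unfolding seqsize_def
    by (rule sum.mono_neutral_left) (use T in \<open>auto simp: not_less, meson not_le\<close>)
  have "(\<Sum>t<T. gamma t) \<le> (\<Sum>t<T. int (a (J t)) + int (card (C t)))"
    using G by (intro sum_mono) auto
  moreover have "(\<Sum>t<T. int (a (J t)) + int (card (C t))) = int (\<Sum>t<T. a (J t)) + int (\<Sum>t<T. card (C t))"
    by (simp add: sum.distrib)
  moreover have "int (\<Sum>t<T. a (J t)) \<le> int (card {(r, c). r < a c \<and> r + d + 1 \<le> c})"
    using Sum2[of T] by (simp only: of_nat_le_iff)
  moreover have "int (\<Sum>t<T. card (C t)) \<le> int (perm_length w)" using Sum1[of T] by (simp only: of_nat_le_iff)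
  ultimately have "(\<Sum>t<T. gamma t) \<le> int (card {(r, c). r < a c \<and> r + d + 1 \<le> c}) + int (perm_length w)"
    by linarith
  then show ?thesis using T seq by blast
qed

lemma vtail: "N \<le> q \<Longrightarrow> d \<le> v q"
  using F3[of "q - N"] unfolding J_def by simp

lemma vge: "i < N \<Longrightarrow> i \<le> v i"
proof (induction i)
  case 0 then show ?case by simp
next
  case (Suc i)
  then have "v i < v (Suc i)" using F1[of i "Suc i"] by simp
  then show ?case using Suc by simp
qed

lemma E1: "i < d \<Longrightarrow> v i = i"
proof (induction i rule: less_induct)
  case (less i)
  define p where "p = w i"
  have vp: "v p = i" unfolding p_def by (rule vw)
  have pN: "p < N"
  proof (rule ccontr)
    assume "\<not> p < N"
    then have "d \<le> v p" using vtail by simp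
    then show False using vp less.prems by simp
  qed
  then have "p \<le> i" using vge vp by metis
  moreover have "\<not> p < i"
  proof
    assume "p < i"
    then have "v p = p" using less.IH less.prems by simp
    then show False using vp \<open>p < i\<close> by simp
  qed
  ultimately have "p = i" by simp
  then show ?case using vp by simp
qed

lemma J_ge: "t \<le> J t" using A_card[of t] by simp

lemma A_down: "A t = {..<J t - t}"
proof -
  have "finite (A t)" unfolding A_def by simp
  moreover have "\<forall>x\<in>A t. \<forall>y\<le>x. y \<in> A t"
  proof (intro ballI allI impI)
    fix x y assume x: "x \<in> A t" and yx: "y \<le> x"
    have "v y \<le> v x"
    proof (cases "y = x")
      case False then show ?thesis using F1[of y x] x yx unfolding A_def by simp
    qed simp
    then show "y \<in> A t" using x yx unfolding A_def by simp
  qed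
  ultimately have "A t = {..<card (A t)}" by (rule down_closed)
  moreover have "card (A t) = J t - t" using A_card[of t] by simp
  ultimately show ?thesis by simp
qed

lemma conjZ_mid:
  assumes aK: "\<forall>j\<ge>d. a j = 0" and i: "d \<le> i" "i < N"
  shows "conjZ gamma (n - 1 - (i - d)) = v i - i"
proof -
  have key: "int (n - 1 - (i - d)) < gamma t \<longleftrightarrow> J t < v i" for t
  proof -
    have "a (J t) = 0" using aK F3[of t] by simp
    then have g: "gamma t = int N + int t - int (J t)" using gJ[of t] by simp
    have nn: "int (n - 1 - (i - d)) = int N - 1 - int i" using i Nd by simp
    have jt: "t \<le> J t" by (rule J_ge)
    have "int (n - 1 - (i - d)) < gamma t \<longleftrightarrow> J t - t \<le> i" using g nn jt by linarith
    also have "\<dots> \<longleftrightarrow> i \<notin> A t" using A_down[of t] by (simp add: not_less)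
    also have "\<dots> \<longleftrightarrow> J t < v i"
    proof -
      have "v i \<noteq> J t" unfolding J_def using vneq i by simp
      then show ?thesis unfolding A_def using i(2) by (simp add: not_less order_le_less)
    qed
    finally show ?thesis .
  qed
  have c1: "conjZ gamma (n - 1 - (i - d)) = card {t. J t < v i}"
    unfolding conjZ_def using key by simp
  have "{t. J t < v i} \<subseteq> {..<v i}"
  proof
    fix t assume "t \<in> {t. J t < v i}"
    then show "t \<in> {..<v i}" using J_ge[of t] by simp
  qed
  then have ft: "finite {t. J t < v i}" by (rule finite_subset) simp
  have e: "{p. v p < v i} = {..<i} \<union> (\<lambda>t. N + t) ` {t. J t < v i}"
  proof (intro set_eqI iffI)
    fix p assume p: "p \<in> {p. v p < v i}"
    show "p \<in> {..<i} \<union> (\<lambda>t. N + t) ` {t. J t < v i}"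
    proof (cases "p < N")
      case True
      have "p < i"
      proof (rule ccontr)
        assume "\<not> p < i"
        then have "i \<le> p" by simp
        then have "v i \<le> v p" using F1[of i p] True by (cases "i = p") auto
        then show False using p by simp
      qed
      then show ?thesis by simp
    next
      case False
      then have "p = N + (p - N)" "J (p - N) < v i" using p unfolding J_def by auto
      then show ?thesis by blast
    qed
  next
    fix p assume p: "p \<in> {..<i} \<union> (\<lambda>t. N + t) ` {t. J t < v i}"
    show "p \<in> {p. v p < v i}"
    proof (cases "p < i")
      case True then show ?thesis using F1[of p i] i by simp
    next
      case False
      then obtain t where "p = N + t" "J t < v i" using p by blast
      then show ?thesis unfolding J_def by simp
    qed
  qed
  have "card ({..<i} \<union> (\<lambda>t. N + t) ` {t. J t < v i}) = card {..<i} + card ((\<lambda>t. N + t) ` {t. J t < v i})"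
    by (rule card_Un_disjoint) (use ft i in \<open>auto simp: Nd\<close>)
  moreover have "card ((\<lambda>t. N + t) ` {t. J t < v i}) = card {t. J t < v i}"
    by (rule card_image) (simp add: inj_on_def)
  ultimately have "v i = i + card {t. J t < v i}" using e card_vless[of "v i"] by simp
  then show ?thesis using c1 by simp
qed

end


theorem lemma3p12:
  fixes n d k :: nat and lam alpha w :: "nat \<Rightarrow> nat" and beta gamma :: "nat \<Rightarrow> int"
  assumes "0 < k"
    and "is_partition lam" and "lam 0 \<le> d" and "plen lam \<le> k"
    and "is_partition alpha" and "alpha n \<le> n + d"
    and "tauC k alpha = Some lam"
    and "finite_perm w"
    and "dot w (\<lambda>i. int (conj alpha i)) =
           (\<lambda>i. if i < n + d then beta i else gamma (i - (n + d)))"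
    and "\<forall>i. Suc i < n + d \<longrightarrow> beta (Suc i) \<le> beta i"
    and "gamma 0 \<le> int n" and "\<forall>i. gamma (Suc i) \<le> gamma i" and "\<forall>i. 0 \<le> gamma i"
  shows "enat (nat (seqsize gamma)) \<le> iotaC k alpha + enat (perm_length w)
    \<and> (enat (nat (seqsize gamma)) = iotaC k alpha + enat (perm_length w) \<longrightarrow>
         iotaC k alpha = 0
       \<and> (\<lambda>i. int (conj alpha i)) = (\<lambda>i. int (conj lam i))
       \<and> (\<lambda>i. int (conj lam i)) = (\<lambda>i. if i < d then beta i else 0)
       \<and> dot w (\<lambda>i. int (conj alpha i)) =
           (\<lambda>i. if i < d then int (conj lam i)
                else if i < d + n then - int (conjZ gamma (n - 1 - (i - d)))
                else gamma (i - (d + n)))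
       \<and> seqsize gamma = int (perm_length w))"
proof -
  let ?a = "conj alpha"
  let ?N = "n + d"
  obtain x where itx: "iota_tau k alpha = Some x" and sx: "snd x = lam"
    using assms(7) unfolding tauC_def by auto
  obtain c where it: "iota_tau k alpha = Some (c, lam)" using itx sx by (cases x) auto
  have ic: "iotaC k alpha = enat c" unfolding iotaC_def using it by simp
  have im: "Bd d alpha + (if c = 0 then 0 else 1) \<le> c \<and> (c = 0 \<longrightarrow> lam = alpha)"
    using iota_main[where N="card (diagram alpha)" and k=k and d=d] it assms(5) assms(3) by blast
  have pa: "is_partition alpha" by (rule assms(5))
  have aanti: "\<forall>i. ?a (Suc i) \<le> ?a i"
  proof
    fix i
    have "{j. Suc i < alpha j} \<subseteq> {j. i < alpha j}" by auto
    moreover have "finite {j. i < alpha j}" using part_level[OF pa, of i] by (metis finite_lessThan)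
    ultimately show "?a (Suc i) \<le> ?a i" unfolding conj_def by (rule card_mono[rotated])
  qed
  have az: "\<forall>j\<ge>alpha 0. ?a j = 0"
  proof (intro allI impI)
    fix j assume j: "alpha 0 \<le> j"
    have "{i. j < alpha i} = {}" using part_anti[OF pa, of 0] j by (auto simp: not_less) (meson le0 le_trans not_le)
    then show "?a j = 0" unfolding conj_def by simp
  qed
  have dotv: "dot w (\<lambda>i. int (?a i)) i = int (?a (inv w i)) - int (inv w i) + int i" for i
    unfolding dot_def rho_def by simp
  have H: "\<forall>i. int (?a (inv w i)) - int (inv w i) + int i = (if i < ?N then beta i else gamma (i - ?N))"
    using assms(9) dotv by (metis (no_types, lifting))
  have loc: "pset w ?a ?N n d (alpha 0) beta gamma"
    unfolding pset_def using assms(8) aanti az H assms(10-13) unfolding finite_perm_def by blast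
  interpret P: pset w ?a ?N n d "alpha 0" beta gamma by (rule loc)
  obtain T where seq: "seqsize gamma = (\<Sum>t<T. gamma t)"
    and ineq: "(\<Sum>t<T. gamma t) \<le> int (card {(r, c). r < ?a c \<and> r + d + 1 \<le> c}) + int (perm_length w)"
    using P.main_ineq by blast
  have "{(r, c). r < ?a c \<and> r + d + 1 \<le> c} = {(j, c). c < alpha j \<and> j + d + 1 \<le> c}"
    using conj_iff[OF pa] by auto
  then have bd: "card {(r, c). r < ?a c \<and> r + d + 1 \<le> c} = Bd d alpha" unfolding Bd_def by simp
  have s0: "0 \<le> seqsize gamma" unfolding seqsize_def using assms(13) by (simp add: sum_nonneg)
  have le: "seqsize gamma + (if c = 0 then 0 else 1) \<le> int c + int (perm_length w)"
    using seq ineq bd im by auto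
  have part1: "enat (nat (seqsize gamma)) \<le> iotaC k alpha + enat (perm_length w)"
    using le s0 ic by (auto split: if_splits)
  have part2: "iotaC k alpha = 0
       \<and> (\<lambda>i. int (conj alpha i)) = (\<lambda>i. int (conj lam i))
       \<and> (\<lambda>i. int (conj lam i)) = (\<lambda>i. if i < d then beta i else 0)
       \<and> dot w (\<lambda>i. int (conj alpha i)) =
           (\<lambda>i. if i < d then int (conj lam i)
                else if i < d + n then - int (conjZ gamma (n - 1 - (i - d)))
                else gamma (i - (d + n)))
       \<and> seqsize gamma = int (perm_length w)"
    if eq: "enat (nat (seqsize gamma)) = iotaC k alpha + enat (perm_length w)"
  proof -
    have "nat (seqsize gamma) = c + perm_length w" using eq ic by simp
    then have se: "seqsize gamma = int c + int (perm_length w)" using s0 by linarith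
    then have c0: "c = 0" using le by (auto split: if_splits)
    then have la: "lam = alpha" using im by simp
    have aK: "\<forall>j\<ge>d. ?a j = 0" using az assms(3) la by auto
    have i1: "iotaC k alpha = 0" using ic c0 by (simp add: zero_enat_def)
    have dsmall: "int (?a i) = beta i" if "i < d" for i
    proof -
      have "inv w i = i" using P.E1 that by blast
      then show ?thesis using P.sH[of i] that by simp
    qed
    have i3: "(\<lambda>i. int (conj lam i)) = (\<lambda>i. if i < d then beta i else 0)"
      using dsmall aK la by auto
    have i4: "dot w (\<lambda>i. int (conj alpha i)) i =
           (if i < d then int (conj lam i)
                else if i < d + n then - int (conjZ gamma (n - 1 - (i - d)))
                else gamma (i - (d + n)))" for i
    proof (cases "i < d")
      case True
      then show ?thesis using dotv[of i] P.E1[OF True] la by simp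
    next
      case False
      show ?thesis
      proof (cases "i < d + n")
        case True
        have vi: "i \<le> inv w i" using P.vge True by simp
        then have "?a (inv w i) = 0" using aK False by simp
        moreover have "conjZ gamma (n - 1 - (i - d)) = inv w i - i"
          using P.conjZ_mid[OF aK] False True by simp
        ultimately show ?thesis using dotv[of i] False True vi by simp
      next
        case False2: False
        then show ?thesis using False assms(9) by (simp add: add.commute)
      qed
    qed
    show ?thesis using i1 la i3 i4 se c0 by auto
  qed
  show ?thesis using part1 part2 by blast
qed

end
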